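(* Let $k$ be a field, $A=kQ_A/I_A$ a monomial algebra with vertices $e_1,\dots,e_n$, and $B=kQ_B/I_B$ the algebra obtained from $A$ by gluing the distinct non-isolated vertices $e_1$ and $e_n$, with quiver morphism $\varphi:Q_A\to Q_B$. Then: (1) $\varphi$ induces a surjective map $\widetilde\varphi:\mathcal B_A\to\mathcal B_B$, $p\mapsto p^*$, such that $\widetilde\varphi^{-1}(p^* )=\{p\}$ for $p^*\ne f_1$ and $\widetilde\varphi^{-1}(f_1)=\{e_1,e_n\}$. (2) For $p,q\in\mathcal B_A$, if $p\|q$ in $Q_A$ then $p^*\|q^*$ in $Q_B$. (3) $\widetilde\varphi$ induces $k$-linear maps $\psi_0:k((Q_A)_0\|\mathcal B_A)\to k((Q_B)_0\|\mathcal B_B)$, $\psi_1:k((Q_A)_1\|\mathcal B_A)\to k((Q_B)_1\|\mathcal B_B)$, $\psi_2:k(Z_A\|\mathcal B_A)\to k(Z_B\|\mathcal B_B)$, each given by $x\|y\mapsto x^*\|y^*$.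
   Context: Monomial algebra: $A=kQ_A/I_A$, $Q_A$ finite quiver, $I_A$ admissible ideal generated by a minimal set $Z_A$ of paths of length $\ge2$; $\mathcal B_A$ is the set of paths of $Q_A$ (including the trivial paths $e_i$) not containing any element of $Z_A$ as a subpath, a basis of $A$. Gluing: $B$ is the subalgebra of $A$ generated by $f_1=e_1+e_n$, $f_i=e_i$ ($2\le i\le n-1$) and all arrows; $B\cong kQ_B/I_B$, where $Q_B$ has vertices $f_1,\dots,f_{n-1}$ and arrows $\alpha^*$ for the arrows $\alpha$ of $Q_A$ with endpoints given by $\varphi$; $\varphi(e_i)=f_i$ ($2\le i\le n-1$), $\varphi(e_1)=\varphi(e_n)=f_1$, $\varphi(\alpha)=\alpha^*$; for a path $p=a_m\cdots a_1$, $p^*=a_m^*\cdots a_1^*$. $I_B$ is generated by $Z_B=\{r^*:r\in Z_A\}\cup\{b^*c^*:b,c\text{ arrows of }Q_A,\ t(c),s(b)\in\{e_1,e_n\},\ t(c)\neq s(b)\}$, and $\mathcal B_B$ is the set of paths of $Q_B$ avoiding $Z_B$. $p\|q$ means $p,q$ have the same source and the same target; for path sets $X,Y$, $k(X\|Y)$ is the vector space with basis the pairs $x\|y$ of parallel paths $x\in X,y\in Y$. *)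

theory Defs
  imports Main
begin

text \<open>A path is a pair (v, [a1,...,am]) : starting vertex v and
the arrows in the order they are traversed (a1 first). The trivial path e_v is (v, []).\<close>

type_synonym 'a qpath = "nat \<times> 'a list"

definition is_path :: "nat set \<Rightarrow> 'a set \<Rightarrow> ('a \<Rightarrow> nat) \<Rightarrow> ('a \<Rightarrow> nat) \<Rightarrow> 'a qpath \<Rightarrow> bool" where
  "is_path V Ar s t p \<longleftrightarrow> fst p \<in> V \<and> set (snd p) \<subseteq> Ar \<and>
     (snd p \<noteq> [] \<longrightarrow> s (hd (snd p)) = fst p) \<and>
     (\<forall>i. Suc i < length (snd p) \<longrightarrow> t (snd p ! i) = s (snd p ! Suc i))"

definition ptgt :: "('a \<Rightarrow> nat) \<Rightarrow> 'a qpath \<Rightarrow> nat" where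
  "ptgt t p = (if snd p = [] then fst p else t (last (snd p)))"

definition vertex_at :: "('a \<Rightarrow> nat) \<Rightarrow> 'a qpath \<Rightarrow> nat \<Rightarrow> nat" where
  "vertex_at t p i = (if i = 0 then fst p else t (snd p ! (i - 1)))"

definition subpath :: "('a \<Rightarrow> nat) \<Rightarrow> 'a qpath \<Rightarrow> 'a qpath \<Rightarrow> bool" where
  "subpath t q p \<longleftrightarrow> (\<exists>u w. snd p = u @ snd q @ w \<and> fst q = vertex_at t p (length u))"

definition avoids :: "('a \<Rightarrow> nat) \<Rightarrow> 'a qpath set \<Rightarrow> 'a qpath \<Rightarrow> bool" where
  "avoids t Z p \<longleftrightarrow> \<not> (\<exists>r\<in>Z. subpath t r p)"

definition basis_paths :: "nat set \<Rightarrow> 'a set \<Rightarrow> ('a \<Rightarrow> nat) \<Rightarrow> ('a \<Rightarrow> nat) \<Rightarrow> 'a qpath set \<Rightarrow> 'a qpath set" where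
  "basis_paths V Ar s t Z = {p. is_path V Ar s t p \<and> avoids t Z p}"

definition parallel :: "('a \<Rightarrow> nat) \<Rightarrow> 'a qpath \<Rightarrow> 'a qpath \<Rightarrow> bool" where
  "parallel t p q \<longleftrightarrow> fst p = fst q \<and> ptgt t p = ptgt t q"

text \<open>Monomial algebra data: finite quiver with vertices 1..n, Z a minimal set of paths of
length \<ge> 2 generating an admissible ideal (admissibility: all sufficiently long paths
contain an element of Z).\<close>
definition monomial_data :: "nat \<Rightarrow> 'a set \<Rightarrow> ('a \<Rightarrow> nat) \<Rightarrow> ('a \<Rightarrow> nat) \<Rightarrow> 'a qpath set \<Rightarrow> bool" where
  "monomial_data n Ar s t Z \<longleftrightarrow>
     finite Ar \<and> (\<forall>a\<in>Ar. s a \<in> {1..n} \<and> t a \<in> {1..n}) \<and>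
     finite Z \<and> (\<forall>r\<in>Z. is_path {1..n} Ar s t r \<and> length (snd r) \<ge> 2) \<and>
     (\<forall>r\<in>Z. \<forall>r'\<in>Z. subpath t r r' \<longrightarrow> r = r') \<and>
     (\<exists>N. \<forall>p. is_path {1..n} Ar s t p \<and> length (snd p) \<ge> N \<longrightarrow> \<not> avoids t Z p)"

text \<open>Gluing e_1 and e_n: vertex map \<phi> (f_1 = 1, f_i = i for 2 \<le> i \<le> n-1); arrows keep
their names (\<alpha>* is identified with \<alpha>).\<close>
definition glue_v :: "nat \<Rightarrow> nat \<Rightarrow> nat" where
  "glue_v n i = (if i = n then 1 else i)"

definition star :: "nat \<Rightarrow> 'a qpath \<Rightarrow> 'a qpath" where
  "star n p = (glue_v n (fst p), snd p)"

definition ZB :: "nat \<Rightarrow> 'a set \<Rightarrow> ('a \<Rightarrow> nat) \<Rightarrow> ('a \<Rightarrow> nat) \<Rightarrow> 'a qpath set \<Rightarrow> 'a qpath set" where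
  "ZB n Ar s t Z = star n ` Z \<union>
     {(glue_v n (s c), [c, b]) | b c. b \<in> Ar \<and> c \<in> Ar \<and> t c \<in> {1, n} \<and> s b \<in> {1, n} \<and> t c \<noteq> s b}"

definition Q0 :: "nat set \<Rightarrow> 'a qpath set" where
  "Q0 V = {(i, []) | i. i \<in> V}"

definition Q1 :: "'a set \<Rightarrow> ('a \<Rightarrow> nat) \<Rightarrow> 'a qpath set" where
  "Q1 Ar s = {(s a, [a]) | a. a \<in> Ar}"

text \<open>k(X || Y): finitely supported k-valued functions on the parallel pairs (x,y),
x \<in> X, y \<in> Y (the pair x||y is the indicator of (x,y)).\<close>
definition kpar :: "('a \<Rightarrow> nat) \<Rightarrow> 'a qpath set \<Rightarrow> 'a qpath set \<Rightarrow> ('a qpath \<times> 'a qpath \<Rightarrow> 'k::field) set" where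
  "kpar t X Y = {f. finite {z. f z \<noteq> 0} \<and>
      (\<forall>z. f z \<noteq> 0 \<longrightarrow> fst z \<in> X \<and> snd z \<in> Y \<and> parallel t (fst z) (snd z))}"

definition basis_vec :: "'a qpath \<Rightarrow> 'a qpath \<Rightarrow> ('a qpath \<times> 'a qpath \<Rightarrow> 'k::field)" where
  "basis_vec x y = (\<lambda>z. if z = (x, y) then 1 else 0)"

text \<open>the linear extension of x||y \<mapsto> x*||y*\<close>
definition psi :: "nat \<Rightarrow> ('a qpath \<times> 'a qpath \<Rightarrow> 'k::field) \<Rightarrow> ('a qpath \<times> 'a qpath \<Rightarrow> 'k)" where
  "psi n f = (\<lambda>w. \<Sum>z\<in>{z. f z \<noteq> 0 \<and> (star n (fst z), star n (snd z)) = w}. f z)"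

definition psi_ok :: "nat \<Rightarrow> ('a \<Rightarrow> nat) \<Rightarrow> 'a qpath set \<Rightarrow> 'a qpath set \<Rightarrow> 'a qpath set \<Rightarrow> 'a qpath set
     \<Rightarrow> ('a qpath \<times> 'a qpath \<Rightarrow> 'k::field) set \<Rightarrow> ('a qpath \<times> 'a qpath \<Rightarrow> 'k) set \<Rightarrow> bool" where
  "psi_ok n t XA YA XB YB SA SB \<longleftrightarrow>
     (\<forall>f\<in>SA. psi n f \<in> SB) \<and>
     (\<forall>f\<in>SA. \<forall>g\<in>SA. psi n (\<lambda>z. f z + g z) = (\<lambda>w. psi n f w + psi n g w)) \<and>
     (\<forall>c. \<forall>f\<in>SA. psi n (\<lambda>z. c * f z) = (\<lambda>w. c * psi n f w)) \<and>
     (\<forall>x\<in>XA. \<forall>y\<in>YA. parallel t x y \<longrightarrow>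
        basis_vec x y \<in> SA \<and> psi n (basis_vec x y :: 'a qpath \<times> 'a qpath \<Rightarrow> 'k) = basis_vec (star n x) (star n y))"

end

theory Submission
  imports Defs
begin

lemma vertex_at_path:
  assumes "is_path V Ar s t p" "i < length (snd p)"
  shows "vertex_at t p i = s (snd p ! i)"
proof (cases i)
  case 0
  then show ?thesis using assms by (cases "snd p") (auto simp: is_path_def vertex_at_def)
next
  case (Suc j)
  then show ?thesis using assms by (auto simp: is_path_def vertex_at_def)
qed

lemma vertex_at_star:
  "vertex_at (glue_v n \<circ> t) (star n p) i = glue_v n (vertex_at t p i)"
  by (simp add: vertex_at_def star_def)

lemma subpath_star:
  "subpath t r p \<Longrightarrow> subpath (glue_v n \<circ> t) (star n r) (star n p)"
  unfolding subpath_def by (auto simp: vertex_at_star) (auto simp: star_def)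

lemma parallel_star:
  "parallel t p q \<Longrightarrow> parallel (glue_v n \<circ> t) (star n p) (star n q)"
  by (auto simp: parallel_def star_def ptgt_def)

lemma split3:
  assumes "Suc i < length xs"
  shows "xs = take i xs @ [xs ! i, xs ! Suc i] @ drop (Suc (Suc i)) xs"
proof -
  have "drop i xs = xs ! i # drop (Suc i) xs" using assms by (simp add: Cons_nth_drop_Suc)
  moreover have "drop (Suc i) xs = xs ! Suc i # drop (Suc (Suc i)) xs"
    using assms by (simp add: Cons_nth_drop_Suc)
  ultimately show ?thesis by (metis append_Cons append_Nil append_take_drop_id)
qed

lemma empty_avoids:
  assumes "\<forall>r\<in>Z. length (snd r) \<ge> 2"
  shows "avoids t Z (i, [])"
  using assms unfolding avoids_def subpath_def by fastforce

lemma kparD: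
  assumes "f \<in> kpar t X Y" "f z \<noteq> 0"
  shows "fst z \<in> X \<and> snd z \<in> Y \<and> parallel t (fst z) (snd z)"
  using assms unfolding kpar_def by blast

lemma kpar_fin:
  assumes "f \<in> kpar t X Y"
  shows "finite {z. f z \<noteq> 0}"
  using assms unfolding kpar_def by blast

lemma psi_ok_gen:
  assumes X: "\<forall>x\<in>XA. star n x \<in> XB" and Y: "\<forall>y\<in>YA. star n y \<in> YB"
    and P: "\<forall>p q. parallel t p q \<longrightarrow> parallel tB (star n p) (star n q)"
  shows "psi_ok n t XA YA XB YB
        (kpar t XA YA :: ('a qpath \<times> 'a qpath \<Rightarrow> 'k::field) set) (kpar tB XB YB)"
proof -
  let ?M = "\<lambda>z::'a qpath \<times> 'a qpath. (star n (fst z), star n (snd z))"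
  have A: "psi n f \<in> kpar tB XB YB" if f: "f \<in> kpar t XA YA" for f :: "'a qpath \<times> 'a qpath \<Rightarrow> 'k"
  proof -
    have fin: "finite {z. f z \<noteq> 0}" using kpar_fin[OF f] .
    have sub: "{w. psi n f w \<noteq> 0} \<subseteq> ?M ` {z. f z \<noteq> 0}"
    proof
      fix w
      assume w: "w \<in> {w. psi n f w \<noteq> 0}"
      show "w \<in> ?M ` {z. f z \<noteq> 0}"
      proof (rule ccontr)
        assume "w \<notin> ?M ` {z. f z \<noteq> 0}"
        then have E: "{z. f z \<noteq> 0 \<and> ?M z = w} = {}" by blast
        have "psi n f w = 0" unfolding psi_def E by (rule sum.empty)
        then show False using w by simp
      qed
    qed
    have "finite {w. psi n f w \<noteq> 0}" using finite_subset[OF sub] fin by blast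
    moreover have "fst w \<in> XB \<and> snd w \<in> YB \<and> parallel tB (fst w) (snd w)" if nz: "psi n f w \<noteq> 0" for w
    proof -
      have "w \<in> ?M ` {z. f z \<noteq> 0}" using sub nz by blast
      then obtain z where z: "f z \<noteq> 0" "w = ?M z" by blast
      then have "fst z \<in> XA" "snd z \<in> YA" "parallel t (fst z) (snd z)" using kparD[OF f z(1)] by auto
      then show ?thesis using z X Y P by (simp del: split_paired_All)
    qed
    ultimately show ?thesis unfolding kpar_def by blast
  qed
  have B: "psi n (\<lambda>z. f z + g z) = (\<lambda>w. psi n f w + psi n g w)"
    if f: "f \<in> kpar t XA YA" and g: "g \<in> kpar t XA YA" for f g :: "'a qpath \<times> 'a qpath \<Rightarrow> 'k"
  proof
    fix w
    have ff: "finite {z. f z \<noteq> 0}" using kpar_fin[OF f] .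
    have gf: "finite {z. g z \<noteq> 0}" using kpar_fin[OF g] .
    let ?S = "{z. (f z \<noteq> 0 \<or> g z \<noteq> 0) \<and> ?M z = w}"
    have Sf: "finite ?S" by (rule finite_subset[of _ "{z. f z \<noteq> 0} \<union> {z. g z \<noteq> 0}"]) (use ff gf in auto)
    have 1: "(\<Sum>z\<in>{z. f z + g z \<noteq> 0 \<and> ?M z = w}. f z + g z) = (\<Sum>z\<in>?S. f z + g z)"
      by (rule sum.mono_neutral_left[OF Sf]) auto
    have 2: "(\<Sum>z\<in>{z. f z \<noteq> 0 \<and> ?M z = w}. f z) = (\<Sum>z\<in>?S. f z)"
      by (rule sum.mono_neutral_left[OF Sf]) auto
    have 3: "(\<Sum>z\<in>{z. g z \<noteq> 0 \<and> ?M z = w}. g z) = (\<Sum>z\<in>?S. g z)"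
      by (rule sum.mono_neutral_left[OF Sf]) auto
    show "psi n (\<lambda>z. f z + g z) w = psi n f w + psi n g w"
      unfolding psi_def using 1 2 3 by (simp add: sum.distrib)
  qed
  have C: "psi n (\<lambda>z. c * f z) = (\<lambda>w. c * psi n f w)" for c and f :: "'a qpath \<times> 'a qpath \<Rightarrow> 'k"
  proof (cases "c = 0")
    case True then show ?thesis by (simp add: psi_def)
  next
    case False then show ?thesis by (simp add: psi_def sum_distrib_left)
  qed
  have D: "basis_vec x y \<in> (kpar t XA YA :: ('a qpath \<times> 'a qpath \<Rightarrow> 'k) set) \<and>
      psi n (basis_vec x y :: 'a qpath \<times> 'a qpath \<Rightarrow> 'k) = basis_vec (star n x) (star n y)"
    if "x \<in> XA" "y \<in> YA" "parallel t x y" for x y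
  proof
    have "{z. (basis_vec x y :: 'a qpath \<times> 'a qpath \<Rightarrow> 'k) z \<noteq> 0} = {(x, y)}"
      by (auto simp: basis_vec_def)
    then show "basis_vec x y \<in> (kpar t XA YA :: ('a qpath \<times> 'a qpath \<Rightarrow> 'k) set)"
      using that by (auto simp: kpar_def basis_vec_def split: if_splits)
    show "psi n (basis_vec x y :: 'a qpath \<times> 'a qpath \<Rightarrow> 'k) = basis_vec (star n x) (star n y)"
    proof
      fix w
      have "{z. (basis_vec x y :: 'a qpath \<times> 'a qpath \<Rightarrow> 'k) z \<noteq> 0 \<and> ?M z = w} =
            (if ?M (x, y) = w then {(x, y)} else {})"
        by (auto simp: basis_vec_def)
      then show "psi n (basis_vec x y :: 'a qpath \<times> 'a qpath \<Rightarrow> 'k) w = basis_vec (star n x) (star n y) w"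
        unfolding psi_def by (auto simp: basis_vec_def)
    qed
  qed
  show ?thesis unfolding psi_ok_def using A B C D by blast
qed

lemma glue_range: "i \<in> {1..n} \<Longrightarrow> n \<ge> 2 \<Longrightarrow> glue_v n i \<in> {1..n-1}"
  by (auto simp: glue_v_def)

lemma glue_eq: "glue_v n i = glue_v n j \<Longrightarrow> i \<noteq> j \<Longrightarrow> i \<in> {1..n} \<Longrightarrow> j \<in> {1..n} \<Longrightarrow> i \<in> {1, n} \<and> j \<in> {1, n}"
  by (auto simp: glue_v_def split: if_splits)

lemma star_BB:
  assumes mono: "monomial_data n Ar s t Z" and n2: "n \<ge> 2"
    and p: "p \<in> basis_paths {1..n} Ar s t Z"
  shows "star n p \<in> basis_paths {1..n-1} Ar (glue_v n \<circ> s) (glue_v n \<circ> t) (ZB n Ar s t Z)"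
proof -
  have pp: "is_path {1..n} Ar s t p" and pa: "avoids t Z p" using p by (auto simp: basis_paths_def)
  have ZP: "\<forall>r\<in>Z. is_path {1..n} Ar s t r \<and> length (snd r) \<ge> 2" using mono by (simp add: monomial_data_def)
  have path: "is_path {1..n-1} Ar (glue_v n \<circ> s) (glue_v n \<circ> t) (star n p)"
    using pp glue_range[OF _ n2] unfolding is_path_def star_def by auto
  have av: "avoids (glue_v n \<circ> t) (ZB n Ar s t Z) (star n p)"
    unfolding avoids_def
  proof
    assume "\<exists>r\<in>ZB n Ar s t Z. subpath (glue_v n \<circ> t) r (star n p)"
    then obtain r where r: "r \<in> ZB n Ar s t Z" and sp: "subpath (glue_v n \<circ> t) r (star n p)" by blast
    show False
    proof (cases "r \<in> star n ` Z")
      case True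
      then obtain r0 where r0: "r0 \<in> Z" "r = star n r0" by blast
      from sp r0 obtain u w where uw: "snd p = u @ snd r0 @ w"
        by (auto simp: subpath_def star_def)
      have r0p: "is_path {1..n} Ar s t r0" "length (snd r0) \<ge> 2" using ZP r0 by auto
      then obtain a rest where ar: "snd r0 = a # rest" by (cases "snd r0") auto
      have "length u < length (snd p)" using uw ar by simp
      then have "vertex_at t p (length u) = s (snd p ! length u)" by (rule vertex_at_path[OF pp])
      also have "\<dots> = s a" using uw ar by simp
      also have "\<dots> = fst r0" using r0p(1) ar by (simp add: is_path_def)
      finally have "subpath t r0 p" unfolding subpath_def using uw by auto
      then show False using pa r0 by (auto simp: avoids_def)
    next
      case False
      then obtain b c where r2: "r = (glue_v n (s c), [c, b])" "t c \<noteq> s b"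
        using r unfolding ZB_def by blast
      from sp r2 obtain u w where uw: "snd p = u @ [c, b] @ w"
        by (auto simp: subpath_def star_def)
      have "Suc (length u) < length (snd p)" using uw by simp
      then have "t (snd p ! length u) = s (snd p ! Suc (length u))"
        using pp by (simp add: is_path_def)
      then have "t c = s b" using uw by (simp add: nth_append)
      then show False using r2 by simp
    qed
  qed
  show ?thesis using path av by (simp add: basis_paths_def)
qed

lemma lift_BB:
  assumes mono: "monomial_data n Ar s t Z" and n2: "n \<ge> 2"
    and q: "q \<in> basis_paths {1..n-1} Ar (glue_v n \<circ> s) (glue_v n \<circ> t) (ZB n Ar s t Z)"
  shows "\<exists>p \<in> basis_paths {1..n} Ar s t Z. star n p = q"
proof -
  have qp: "is_path {1..n-1} Ar (glue_v n \<circ> s) (glue_v n \<circ> t) q"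
    and qa: "avoids (glue_v n \<circ> t) (ZB n Ar s t Z) q" using q by (auto simp: basis_paths_def)
  have ZP: "\<forall>r\<in>Z. is_path {1..n} Ar s t r \<and> length (snd r) \<ge> 2"
    and ArV: "\<forall>a\<in>Ar. s a \<in> {1..n} \<and> t a \<in> {1..n}" using mono by (auto simp: monomial_data_def)
  define p where "p = (if snd q = [] then fst q else s (hd (snd q)), snd q)"
  have sq: "star n p = q"
  proof (cases "snd q")
    case Nil then show ?thesis using qp n2 by (auto simp add: p_def star_def glue_v_def prod_eq_iff is_path_def)
  next
    case (Cons a l)
    then have "glue_v n (s a) = fst q" using qp by (simp add: is_path_def)
    then show ?thesis using Cons by (simp add: p_def star_def prod_eq_iff)
  qed
  have fstp: "fst p \<in> {1..n}"
  proof (cases "snd q")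
    case Nil then show ?thesis using qp by (auto simp: p_def is_path_def)
  next
    case (Cons a l)
    then have "a \<in> Ar" using qp by (simp add: is_path_def)
    then show ?thesis using Cons ArV by (simp add: p_def)
  qed
  have cons: "t (snd p ! i) = s (snd p ! Suc i)" if i: "Suc i < length (snd p)" for i
  proof (rule ccontr)
    assume ne: "t (snd p ! i) \<noteq> s (snd p ! Suc i)"
    let ?c = "snd q ! i" and ?b = "snd q ! Suc i"
    have ins: "?c \<in> Ar" "?b \<in> Ar" using qp i by (auto simp: is_path_def p_def)
    have ge: "glue_v n (t ?c) = glue_v n (s ?b)" using qp i by (simp add: is_path_def p_def)
    have nc: "t ?c \<noteq> s ?b" using ne by (simp add: p_def)
    have bc: "t ?c \<in> {1, n} \<and> s ?b \<in> {1, n}"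
      using glue_eq[OF ge nc] ins ArV by auto
    have inZB: "(glue_v n (s ?c), [?c, ?b]) \<in> ZB n Ar s t Z"
      unfolding ZB_def using ins bc nc by blast
    have il: "i < length (snd q)" using i by (simp add: p_def)
    have "vertex_at (glue_v n \<circ> t) q i = (glue_v n \<circ> s) (snd q ! i)"
      by (rule vertex_at_path[OF qp il])
    then have "subpath (glue_v n \<circ> t) (glue_v n (s ?c), [?c, ?b]) q"
      unfolding subpath_def using split3[of i "snd q"] i
      by (intro exI[of _ "take i (snd q)"] exI[of _ "drop (Suc (Suc i)) (snd q)"]) (auto simp: p_def)
    then show False using qa inZB by (auto simp: avoids_def)
  qed
  have pp: "is_path {1..n} Ar s t p"
    using fstp cons qp unfolding is_path_def by (auto simp: p_def)
  have pa: "avoids t Z p"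
    unfolding avoids_def
  proof
    assume "\<exists>r\<in>Z. subpath t r p"
    then obtain r where "r \<in> Z" "subpath t r p" by blast
    then have "star n r \<in> ZB n Ar s t Z" "subpath (glue_v n \<circ> t) (star n r) q"
      using subpath_star[of t r p n] sq by (auto simp: ZB_def)
    then show False using qa by (auto simp: avoids_def)
  qed
  show ?thesis unfolding basis_paths_def using pp pa sq by blast
qed

theorem proposition3p3:
  fixes n :: nat and Ar :: "'a set" and s t :: "'a \<Rightarrow> nat" and Z :: "'a qpath set"
  assumes mono: "monomial_data n Ar s t Z"
    and distinct: "n \<ge> 2"
    and nonisol1: "\<exists>a\<in>Ar. s a = 1 \<or> t a = 1"
    and nonisoln: "\<exists>a\<in>Ar. s a = n \<or> t a = n"
  defines "BA \<equiv> basis_paths {1..n} Ar s t Z"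
    and "BB \<equiv> basis_paths {1..n-1} Ar (glue_v n \<circ> s) (glue_v n \<circ> t) (ZB n Ar s t Z)"
    and "tB \<equiv> glue_v n \<circ> t"
  shows
    "(\<forall>p\<in>BA. star n p \<in> BB) \<and> star n ` BA = BB \<and>
     (\<forall>p\<in>BA. star n p \<noteq> (1, []) \<longrightarrow> {q\<in>BA. star n q = star n p} = {p}) \<and>
     {q\<in>BA. star n q = (1, [])} = {(1, []), (n, [])} \<and>
     (\<forall>p\<in>BA. \<forall>q\<in>BA. parallel t p q \<longrightarrow> parallel tB (star n p) (star n q)) \<and>
     psi_ok n t (Q0 {1..n}) BA (Q0 {1..n-1}) BB
        (kpar t (Q0 {1..n}) BA :: ('a qpath \<times> 'a qpath \<Rightarrow> 'k::field) set) (kpar tB (Q0 {1..n-1}) BB) \<and>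
     psi_ok n t (Q1 Ar s) BA (Q1 Ar (glue_v n \<circ> s)) BB
        (kpar t (Q1 Ar s) BA :: ('a qpath \<times> 'a qpath \<Rightarrow> 'k::field) set) (kpar tB (Q1 Ar (glue_v n \<circ> s)) BB) \<and>
     psi_ok n t Z BA (ZB n Ar s t Z) BB
        (kpar t Z BA :: ('a qpath \<times> 'a qpath \<Rightarrow> 'k::field) set) (kpar tB (ZB n Ar s t Z) BB)"
proof -
  have ZP: "\<forall>r\<in>Z. length (snd r) \<ge> 2" using mono by (simp add: monomial_data_def)
  have c1: "\<forall>p\<in>BA. star n p \<in> BB" using star_BB[OF mono distinct] unfolding BA_def BB_def by blast
  have c2: "star n ` BA = BB"
  proof
    show "star n ` BA \<subseteq> BB" using c1 by blast
    show "BB \<subseteq> star n ` BA" using lift_BB[OF mono distinct] unfolding BA_def BB_def by blast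
  qed
  have c3: "{q\<in>BA. star n q = star n p} = {p}" if p: "p \<in> BA" "star n p \<noteq> (1, [])" for p
  proof -
    have "q = p" if q: "q \<in> BA" "star n q = star n p" for q
    proof -
      have sn: "snd q = snd p" and gf: "glue_v n (fst q) = glue_v n (fst p)" using q(2) by (auto simp: star_def)
      show ?thesis
      proof (cases "snd p")
        case Nil
        then have "glue_v n (fst p) \<noteq> 1" using p(2) by (auto simp: star_def)
        then have "fst q = fst p" using gf by (auto simp: glue_v_def split: if_splits)
        then show ?thesis using sn by (simp add: prod_eq_iff)
      next
        case (Cons a l)
        then have "fst q = fst p" using sn p(1) q(1)
          by (auto simp: BA_def basis_paths_def is_path_def)
        then show ?thesis using sn by (simp add: prod_eq_iff)
      qed
    qed
    then show ?thesis using p by blast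
  qed
  have c4: "{q\<in>BA. star n q = (1, [])} = {(1, []), (n, [])}"
  proof
    show "{q\<in>BA. star n q = (1, [])} \<subseteq> {(1, []), (n, [])}"
    proof
      fix q assume q: "q \<in> {q\<in>BA. star n q = (1, [])}"
      then have qB: "q \<in> BA" and sq: "star n q = (1, [])" by blast+
      from sq have e: "snd q = []" and g: "glue_v n (fst q) = 1" unfolding star_def by simp_all
      have "fst q \<in> {1..n}" using qB unfolding BA_def basis_paths_def is_path_def by blast
      then have "fst q = 1 \<or> fst q = n" using g unfolding glue_v_def by (cases "fst q = n") simp_all
      then have "q = (1, []) \<or> q = (n, [])" using e by (metis prod.collapse)
      then show "q \<in> {(1, []), (n, [])}" by blast
    qed
    have "(1, []) \<in> BA" "(n, []) \<in> BA"
      using empty_avoids[OF ZP] distinct unfolding BA_def basis_paths_def is_path_def by auto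
    moreover have "star n (1, []) = (1, [])" "star n (n, []) = (1, [])"
      using distinct unfolding star_def glue_v_def by auto
    ultimately show "{(1, []), (n, [])} \<subseteq> {q\<in>BA. star n q = (1, [])}"
      by blast
  qed
  have P: "\<forall>p q. parallel t p q \<longrightarrow> parallel tB (star n p) (star n q)"
    using parallel_star unfolding tB_def by blast
  have BAB: "\<forall>y\<in>BA. star n y \<in> BB" using c1 .
  have X0: "\<forall>x\<in>Q0 {1..n}. star n x \<in> Q0 {1..n-1}"
    using glue_range[OF _ distinct] by (auto simp: Q0_def star_def)
  have X1: "\<forall>x\<in>Q1 Ar s. star n x \<in> Q1 Ar (glue_v n \<circ> s)"
    by (auto simp: Q1_def star_def)
  have X2: "\<forall>x\<in>Z. star n x \<in> ZB n Ar s t Z"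
    by (auto simp: ZB_def)
  have c3': "\<forall>p\<in>BA. star n p \<noteq> (1, []) \<longrightarrow> {q\<in>BA. star n q = star n p} = {p}"
    using c3 by blast
  have c5: "\<forall>p\<in>BA. \<forall>q\<in>BA. parallel t p q \<longrightarrow> parallel tB (star n p) (star n q)"
    using P by blast
  show ?thesis
    by (intro conjI c1 c2 c3' c4 c5 psi_ok_gen[OF X0 BAB P] psi_ok_gen[OF X1 BAB P] psi_ok_gen[OF X2 BAB P])
qed


end
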